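(* Let $\mathcal{X}$ and $\mathcal{Y}$ be triangle meshes with $n_{\mathcal{X}}$ and $n_{\mathcal{Y}}$ vertices and symmetric positive definite mass matrices $M_{\mathcal{X}}\in\mathbb{R}^{n_{\mathcal{X}}\times n_{\mathcal{X}}}$, $M_{\mathcal{Y}}\in\mathbb{R}^{n_{\mathcal{Y}}\times n_{\mathcal{Y}}}$. Let $\Phi_{\mathcal{X},k}\in\mathbb{R}^{n_{\mathcal{X}}\times k}$ and $\Phi_{\mathcal{Y},k}\in\mathbb{R}^{n_{\mathcal{Y}}\times k}$ be the matrices of the first $k$ Laplacian eigenfunctions, normalized so that $\Phi_{\mathcal{X},k}^{\top}M_{\mathcal{X}}\Phi_{\mathcal{X},k}=I$ and $\Phi_{\mathcal{Y},k}^{\top}M_{\mathcal{Y}}\Phi_{\mathcal{Y},k}=I$, and set $\Phi_{\mathcal{X},k}^{\dagger}=\Phi_{\mathcal{X},k}^{\top}M_{\mathcal{X}}$, $\Phi_{\mathcal{Y},k}^{\dagger}=\Phi_{\mathcal{Y},k}^{\top}M_{\mathcal{Y}}$. Let $G_{\mathcal{X}},G_{\mathcal{Y}}\in\mathbb{R}^{k\times k}$ be diagonal matrices with diagonal entries in $(0,1]$, and define the learnable bases $\Psi_{\mathcal{X},k}=\Phi_{\mathcal{X},k}G_{\mathcal{X}}$, $\Psi_{\mathcal{Y},k}=\Phi_{\mathcal{Y},k}G_{\mathcal{Y}}$ with $\Psi_{\mathcal{X},k}^{\dagger}=G_{\mathcal{X}}^{-1}\Phi_{\mathcal{X},k}^{\top}M_{\mathcal{X}}$,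 $\Psi_{\mathcal{Y},k}^{\dagger}=G_{\mathcal{Y}}^{-1}\Phi_{\mathcal{Y},k}^{\top}M_{\mathcal{Y}}$. Let $F_{\mathcal{X}}\in\mathbb{R}^{n_{\mathcal{X}}\times d}$, $F_{\mathcal{Y}}\in\mathbb{R}^{n_{\mathcal{Y}}\times d}$ be feature matrices and $\Pi_{\mathcal{YX}}\in\mathbb{R}^{n_{\mathcal{Y}}\times n_{\mathcal{X}}}$ a matrix representing a pointwise map from $\mathcal{Y}$ to $\mathcal{X}$. Consider the problem $$C^{\mathrm{A}}_{\mathcal{XY}}=\arg\min_{C\in\mathbb{R}^{k\times k}}\left\|C\,\Psi_{\mathcal{X},k}^{\dagger}F_{\mathcal{X}}-\Psi_{\mathcal{Y},k}^{\dagger}F_{\mathcal{Y}}\right\|_{\mathrm{F}}^2+\lambda\left\|C\Lambda_{\mathcal{X}}-\Lambda_{\mathcal{Y}}C\right\|_{\mathrm{F}}^2,$$ where $\Lambda_{\mathcal{X}},\Lambda_{\mathcal{Y}}$ are the diagonal matrices of the first $k$ eigenvalues. Suppose (a) $\Pi_{\mathcal{YX}}F_{\mathcal{X}}=F_{\mathcal{Y}}$; (b) the columns of $F_{\mathcal{X}}$ lie in the span of the columns of $\Phi_{\mathcal{X},k}$ and the columns of $F_{\mathcal{Y}}$ lie in the span of the columns of $\Phi_{\mathcal{Y},k}$; (c) $\Phi_{\mathcal{X},k}^{\dagger}F_{\mathcal{X}}\in\mathbb{R}^{k\times d}$ and $\Phi_{\mathcal{Y},k}^{\dagger}F_{\mathcal{Y}}\in\mathbb{R}^{k\times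 d}$ are full rank, and $\lambda=0$. Then the minimizer $C^{\mathrm{A}}_{\mathcal{XY}}$ is unique and equals $\Psi_{\mathcal{Y},k}^{\dagger}\Pi_{\mathcal{YX}}\Psi_{\mathcal{X},k}$.
   Context: The matrices $\Psi_{\cdot,k}=\Phi_{\cdot,k}G_{\cdot}$ are called learnable spectral bases; the diagonal matrices $G$ (with entries in $(0,1]$) are called inhibition functions. $\|\cdot\|_{\mathrm{F}}$ is the Frobenius norm. "Full rank" for a $k\times d$ matrix means rank $k$ (requiring $d\ge k$). *)

theory Defs
  imports "HOL-Analysis.Analysis"
begin

definition frob_norm :: "real^'n^'m \<Rightarrow> real" where
  "frob_norm A = sqrt (\<Sum>i\<in>UNIV. \<Sum>j\<in>UNIV. (A $ i $ j)^2)"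

definition is_diag :: "real^'n^'n \<Rightarrow> bool" where
  "is_diag D \<longleftrightarrow> (\<forall>i j. i \<noteq> j \<longrightarrow> D $ i $ j = 0)"

definition spd :: "real^'n^'n \<Rightarrow> bool" where
  "spd M \<longleftrightarrow> transpose M = M \<and> (\<forall>x. x \<noteq> 0 \<longrightarrow> x \<bullet> (M *v x) > 0)"

definition pointwise_map :: "real^'n^'m \<Rightarrow> bool" where
  "pointwise_map P \<longleftrightarrow> (\<forall>i. \<exists>j. \<forall>j'. P $ i $ j' = (if j' = j then 1 else 0))"

end

theory Submission
  imports Defs
begin

lemma frob_sq: "(frob_norm A)^2 = (\<Sum>i\<in>UNIV. \<Sum>j\<in>UNIV. (A $ i $ j)^2)"
  unfolding frob_norm_def by (simp add: sum_nonneg)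

lemma frob_sq_zero: "(frob_norm A)^2 = 0 \<longleftrightarrow> A = 0"
proof -
  have "(\<Sum>i\<in>UNIV. \<Sum>j\<in>UNIV. (A $ i $ j)^2) = 0 \<longleftrightarrow> (\<forall>i j. A $ i $ j = 0)"
    by (simp add: sum_nonneg sum_nonneg_eq_0_iff)
  then show ?thesis by (simp add: frob_sq vec_eq_iff)
qed

lemma matrix_sub_rdistrib: "((A::real^'n^'m) - B) ** C = A ** C - B ** C"
  by (simp add: vec_eq_iff matrix_matrix_mult_def sum_subtractf algebra_simps)

lemma span_cols_range:
  fixes A :: "real^'n^'m"
  assumes "x \<in> span (columns A)" shows "\<exists>w. x = A *v w"
proof -
  have "span (columns A) \<subseteq> range ((*v) A)"
  proof (rule span_minimal)
    show "columns A \<subseteq> range ((*v) A)" by (auto simp: columns_image_basis)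
    show "subspace (range ((*v) A))"
      by (metis linear_subspace_image subspace_UNIV matrix_vector_mul_linear)
  qed
  then show ?thesis using assms by auto
qed

lemma cols_factor:
  fixes F :: "real^'d^'n" and P :: "real^'k^'n"
  assumes "columns F \<subseteq> span (columns P)"
  shows "\<exists>W. F = P ** W"
proof -
  have "\<forall>j. \<exists>w. column j F = P *v w"
    using assms span_cols_range by (auto simp: columns_def)
  then obtain w where w: "\<And>j. column j F = P *v w j" by metis
  show ?thesis
  proof (intro exI[of _ "transpose (\<chi> j. w j)"])
    show "F = P ** transpose (\<chi> j. w j)"
    proof (simp add: vec_eq_iff, intro allI)
      fix i j
      have "F $ i $ j = column j F $ i" by (simp add: column_def)
      also have "\<dots> = (P *v w j) $ i" by (simp add: w)
      finally show "F $ i $ j = (P ** transpose (\<chi> j. w j)) $ i $ j"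
        by (simp add: matrix_vector_mult_def matrix_matrix_mult_def transpose_def)
    qed
  qed
qed

lemma left_cancel_full_rank:
  fixes A :: "real^'d^'k" and D :: "real^'k^'m"
  assumes "rank A = CARD('k)" "D ** A = 0"
  shows "D = 0"
proof -
  have inj: "inj ((*v) (transpose A))"
    using assms(1) by (simp add: full_rank_injective[symmetric] rank_transpose)
  have "transpose A *v (D $ i) = 0" for i
    using assms(2) unfolding vec_eq_iff
    by (simp add: matrix_vector_mult_def matrix_matrix_mult_def transpose_def mult.commute)
  then have "D $ i = 0" for i using inj
    by (metis injD matrix_vector_mult_0_right)
  then show ?thesis by (simp add: vec_eq_iff)
qed

lemma diag_inv:
  fixes GX :: "real^'k^'k"
  assumes d0: "is_diag GX" and r: "\<forall>i. 0 < GX $ i $ i"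
  shows "GX ** (\<chi> i j. if i = j then 1 / GX $ i $ i else 0) = mat 1
       \<and> (\<chi> i j. if i = j then 1 / GX $ i $ i else 0) ** GX = mat 1"
proof -
  have d: "\<forall>i j. i \<noteq> j \<longrightarrow> GX $ i $ j = 0" using d0 by (simp add: is_diag_def)
  have 1: "GX ** (\<chi> i j. if i = j then 1 / GX $ i $ i else 0) = mat 1"
    unfolding vec_eq_iff matrix_matrix_mult_def mat_def
  proof (intro allI)
    fix i j
    have "(\<Sum>k\<in>UNIV. GX $ i $ k * (\<chi> i j. if i = j then 1 / GX $ i $ i else 0) $ k $ j)
        = (\<Sum>k\<in>UNIV. if k = j then GX $ i $ j / GX $ j $ j else 0)"
      by (rule sum.cong) auto
    also have "\<dots> = (if i = j then 1 else 0)" using d r by (simp add: less_le)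
    finally show "(\<chi> i j. \<Sum>k\<in>UNIV. GX $ i $ k * (\<chi> i j. if i = j then 1 / GX $ i $ i else 0) $ k $ j) $ i $ j =
             (\<chi> i j. if i = j then 1 else 0) $ i $ j" by simp
  qed
  have 2: "(\<chi> i j. if i = j then 1 / GX $ i $ i else 0) ** GX = mat 1"
    unfolding vec_eq_iff matrix_matrix_mult_def mat_def
  proof (intro allI)
    fix i j
    have "(\<Sum>k\<in>UNIV. (\<chi> i j. if i = j then 1 / GX $ i $ i else 0) $ i $ k * GX $ k $ j)
        = (\<Sum>k\<in>UNIV. if k = i then GX $ i $ j / GX $ i $ i else 0)"
      by (rule sum.cong) auto
    also have "\<dots> = (if i = j then 1 else 0)" using d r by (simp add: less_le)
    finally show "(\<chi> i j. \<Sum>k\<in>UNIV. (\<chi> i j. if i = j then 1 / GX $ i $ i else 0) $ i $ k * GX $ k $ j) $ i $ j =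
             (\<chi> i j. if i = j then 1 else 0) $ i $ j" by simp
  qed
  show ?thesis using 1 2 by blast
qed

theorem mainTheorem1:
  fixes MX :: "real^'nx^'nx" and MY :: "real^'ny^'ny"
    and LX :: "real^'nx^'nx" and LY :: "real^'ny^'ny"
    and PhiX :: "real^'k^'nx" and PhiY :: "real^'k^'ny"
    and LamX :: "real^'k^'k" and LamY :: "real^'k^'k"
    and GX :: "real^'k^'k" and GY :: "real^'k^'k"
    and FX :: "real^'d^'nx" and FY :: "real^'d^'ny"
    and Pi :: "real^'nx^'ny"
    and lambda :: real
  assumes MX_spd: "spd MX" and MY_spd: "spd MY"
    and LX_sym: "transpose LX = LX" and LY_sym: "transpose LY = LY"
    and LamX_diag: "is_diag LamX" and LamY_diag: "is_diag LamY"
    and eigX: "LX ** PhiX = MX ** PhiX ** LamX"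
    and eigY: "LY ** PhiY = MY ** PhiY ** LamY"
    and orthX: "transpose PhiX ** MX ** PhiX = mat 1"
    and orthY: "transpose PhiY ** MY ** PhiY = mat 1"
    and GX_diag: "is_diag GX" and GY_diag: "is_diag GY"
    and GX_range: "\<forall>i. 0 < GX $ i $ i \<and> GX $ i $ i \<le> 1"
    and GY_range: "\<forall>i. 0 < GY $ i $ i \<and> GY $ i $ i \<le> 1"
    and Pi_map: "pointwise_map Pi"
    and a: "Pi ** FX = FY"
    and bX: "columns FX \<subseteq> span (columns PhiX)"
    and bY: "columns FY \<subseteq> span (columns PhiY)"
    and cX: "rank (transpose PhiX ** MX ** FX) = CARD('k)"
    and cY: "rank (transpose PhiY ** MY ** FY) = CARD('k)"
    and lam0: "lambda = 0"
  shows "(let PsiX = PhiX ** GX; PsiY = PhiY ** GY;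
              PsiXd = matrix_inv GX ** transpose PhiX ** MX;
              PsiYd = matrix_inv GY ** transpose PhiY ** MY;
              E = (\<lambda>C::real^'k^'k. (frob_norm (C ** PsiXd ** FX - PsiYd ** FY))^2
                     + lambda * (frob_norm (C ** LamX - LamY ** C))^2)
          in {C. \<forall>C'. E C \<le> E C'} = {PsiYd ** Pi ** PsiX})"
proof -
  define Gi where "Gi = matrix_inv GX"
  define Gd :: "real^'k^'k" where "Gd = (\<chi> i j. if i = j then 1 / GX $ i $ i else 0)"
  have GGd: "GX ** Gd = mat 1 \<and> Gd ** GX = mat 1"
    unfolding Gd_def using diag_inv GX_diag GX_range by blast
  have Gi: "GX ** Gi = mat 1 \<and> Gi ** GX = mat 1"
    unfolding Gi_def matrix_inv_def by (rule someI[of _ Gd]) (rule GGd)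
  define A0 where "A0 = transpose PhiX ** MX ** FX"
  obtain W where W: "FX = PhiX ** W" using cols_factor[OF bX] by blast
  have PA0: "PhiX ** A0 = FX"
  proof -
    have "A0 = (transpose PhiX ** MX ** PhiX) ** W" unfolding A0_def W by (simp add: matrix_mul_assoc)
    then have "A0 = W" using orthX by simp
    then show ?thesis using W by simp
  qed
  define PsiX where "PsiX = PhiX ** GX"
  define PsiXd where "PsiXd = Gi ** transpose PhiX ** MX"
  define PsiYd where "PsiYd = matrix_inv GY ** transpose PhiY ** MY"
  define B where "B = PsiYd ** FY"
  define C0 where "C0 = PsiYd ** Pi ** PsiX"
  define E where "E = (\<lambda>C::real^'k^'k. (frob_norm (C ** PsiXd ** FX - PsiYd ** FY))^2
                     + lambda * (frob_norm (C ** LamX - LamY ** C))^2)"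
  have E: "E C = (frob_norm (C ** (Gi ** A0) - B))^2" for C
    unfolding E_def lam0 B_def PsiXd_def A0_def by (simp add: matrix_mul_assoc)
  have C0A: "C0 ** (Gi ** A0) = B"
  proof -
    have "C0 ** (Gi ** A0) = PsiYd ** Pi ** PhiX ** (GX ** Gi) ** A0"
      unfolding C0_def PsiX_def by (simp add: matrix_mul_assoc)
    also have "\<dots> = PsiYd ** Pi ** (PhiX ** A0)" using Gi by (simp add: matrix_mul_assoc)
    also have "\<dots> = B" using PA0 a unfolding B_def by (metis matrix_mul_assoc)
    finally show ?thesis .
  qed
  have F0: "(frob_norm (0::real^'d^'k))^2 = 0" using frob_sq_zero by blast
  have E0: "E C0 = 0" using E[of C0] C0A F0 by simp
  have Enn: "E C \<ge> 0" for C using E by simp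
  have rkA0: "rank A0 = CARD('k)" using cX A0_def by simp
  have "{C. \<forall>C'. E C \<le> E C'} = {C0}"
  proof (intro set_eqI iffI)
    fix C assume "C \<in> {C. \<forall>C'. E C \<le> E C'}"
    then have "E C \<le> E C0" by blast
    then have "E C \<le> 0" using E0 by simp
    then have "E C = 0" using Enn[of C] by linarith
    then have "(frob_norm (C ** (Gi ** A0) - B))^2 = 0" using E by simp
    then have "C ** (Gi ** A0) - B = 0" using frob_sq_zero by blast
    then have "(C - C0) ** (Gi ** A0) = 0" using C0A by (simp add: matrix_sub_rdistrib)
    then have "((C - C0) ** Gi) ** A0 = 0" by (simp add: matrix_mul_assoc)
    then have "(C - C0) ** Gi = 0" using left_cancel_full_rank rkA0 by blast
    then have "(C - C0) ** Gi ** GX = 0" by simp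
    then have "C - C0 = 0" using Gi by (simp add: matrix_mul_assoc[symmetric])
    then show "C \<in> {C0}" by simp
  next
    fix C assume "C \<in> {C0}"
    then show "C \<in> {C. \<forall>C'. E C \<le> E C'}" using E0 Enn by simp
  qed
  then show ?thesis unfolding Let_def E_def PsiX_def PsiXd_def PsiYd_def C0_def Gi_def by simp
qed

end
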